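(* Let $Q$ be a finite set of points in $\mathbb{R}^d$ with a partition $Q=\bigcup_{l=1}^jQ_l$ into pairwise disjoint nonempty sets. Let $o$ be the mean point of $Q$, $o_l$ the mean point of $Q_l$ ($1\le l\le j$), $\delta^2=\frac1{|Q|}\sum_{q\in Q}\|q-o\|^2$, and $\mathcal{V}$ the simplex (convex hull) determined by $\{o_1,\dots,o_j\}$. Then for any $0<\epsilon\le1$ one can construct, from the points $o_1,\dots,o_j$ and $\epsilon$ alone, a grid $G\subset\mathcal{V}$ of size $O((8j/\epsilon)^j)$ such that at least one grid point $\tau\in G$ satisfies $\|\tau-o\|\le\sqrt{\epsilon}\,\delta$.
   Context: The implied constant in $O((8j/\epsilon)^j)$ may depend on $j$ (in the paper $j\le k$ is a fixed constant). *)

theory Defs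
  imports Complex_Main
begin

text \<open>Points of R^d are represented as functions nat => real vanishing at all
coordinates i >= d (explicit carrier, so that constants can be uniform in d).\<close>

definition in_Rd :: "nat \<Rightarrow> (nat \<Rightarrow> real) \<Rightarrow> bool" where
  "in_Rd d x \<longleftrightarrow> (\<forall>i\<ge>d. x i = 0)"

definition enorm :: "nat \<Rightarrow> (nat \<Rightarrow> real) \<Rightarrow> real" where
  "enorm d x = sqrt (\<Sum>i<d. (x i)^2)"

definition vdiff :: "(nat \<Rightarrow> real) \<Rightarrow> (nat \<Rightarrow> real) \<Rightarrow> (nat \<Rightarrow> real)" where
  "vdiff x y = (\<lambda>i. x i - y i)"

definition mean_pt :: "(nat \<Rightarrow> real) set \<Rightarrow> (nat \<Rightarrow> real)" where
  "mean_pt Q = (\<lambda>i. (\<Sum>q\<in>Q. q i) / real (card Q))"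

definition simplex_hull :: "(nat \<Rightarrow> real) list \<Rightarrow> (nat \<Rightarrow> real) set" where
  "simplex_hull os = {x. \<exists>c :: nat \<Rightarrow> real. (\<forall>l<length os. c l \<ge> 0)
      \<and> (\<Sum>l<length os. c l) = 1 \<and> x = (\<lambda>i. \<Sum>l<length os. c l * (os ! l) i)}"

end

theory Submission
  imports Defs
begin


lemma var_cluster:
  fixes x :: "'a \<Rightarrow> real"
  assumes "finite A" "A \<noteq> {}"
  shows "real (card A) * ((\<Sum>q\<in>A. x q) / real (card A) - a)^2 \<le> (\<Sum>q\<in>A. (x q - a)^2)"
proof -
  define n where "n = real (card A)"
  define m where "m = (\<Sum>q\<in>A. x q) / n"
  have n0: "n > 0" using assms by (simp add: n_def card_gt_0_iff)
  have s0: "(\<Sum>q\<in>A. (x q - m)) = 0"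
    using n0 by (simp add: sum_subtractf m_def n_def)
  have "(\<Sum>q\<in>A. (x q - a)^2) = (\<Sum>q\<in>A. (x q - m)^2 + 2*(m-a)*(x q - m) + (m-a)^2)"
    by (rule sum.cong) (auto simp: power2_eq_square algebra_simps)
  also have "\<dots> = (\<Sum>q\<in>A. (x q - m)^2) + 2*(m-a)*(\<Sum>q\<in>A. (x q - m)) + n*(m-a)^2"
    by (simp add: sum.distrib sum_distrib_left n_def)
  also have "\<dots> = (\<Sum>q\<in>A. (x q - m)^2) + n*(m-a)^2" using s0 by simp
  finally have "(\<Sum>q\<in>A. (x q - a)^2) \<ge> n*(m-a)^2" by (simp add: sum_nonneg)
  thus ?thesis by (simp add: m_def n_def)
qed

lemma greedy:
  fixes v :: "nat \<Rightarrow> nat \<Rightarrow> real" and w :: "nat \<Rightarrow> real"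
  assumes j: "j \<ge> 1" and wpos: "\<forall>l<j. w l > 0" and wsum: "(\<Sum>l<j. w l) = 1"
    and bal: "\<forall>i<d. (\<Sum>l<j. w l * v l i) = 0"
  shows "\<exists>k::nat\<Rightarrow>nat. (\<Sum>l<j. k l) = n \<and>
     (\<Sum>i<d. (\<Sum>l<j. real (k l) * v l i)^2) \<le> real n * (\<Sum>l<j. w l * (\<Sum>i<d. (v l i)^2))"
proof (induction n)
  case 0
  show ?case by (rule exI[of _ "\<lambda>_. 0"]) simp
next
  case (Suc n)
  define S where "S = (\<Sum>l<j. w l * (\<Sum>i<d. (v l i)^2))"
  from Suc obtain k where k1: "(\<Sum>l<j. k l) = n"
    and k2: "(\<Sum>i<d. (\<Sum>l<j. real (k l) * v l i)^2) \<le> real n * S" unfolding S_def by blast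
  define s where "s i = (\<Sum>l<j. real (k l) * v l i)" for i
  define T where "T = (\<Sum>i<d. (s i)^2)"
  have "(\<Sum>l<j. w l * (\<Sum>i<d. (s i + v l i)^2))
      = (\<Sum>l<j. (\<Sum>i<d. w l * (s i)^2 + 2 * s i * (w l * v l i) + w l * (v l i)^2))"
    by (auto intro!: sum.cong simp: sum_distrib_left power2_eq_square algebra_simps)
  also have "\<dots> = (\<Sum>i<d. (\<Sum>l<j. w l * (s i)^2 + 2 * s i * (w l * v l i) + w l * (v l i)^2))"
    by (rule sum.swap)
  also have "\<dots> = (\<Sum>i<d. (s i)^2 * (\<Sum>l<j. w l) + 2 * s i * (\<Sum>l<j. w l * v l i) + (\<Sum>l<j. w l * (v l i)^2))"
    by (simp add: sum.distrib sum_distrib_left sum_distrib_right algebra_simps)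
  also have "\<dots> = (\<Sum>i<d. (s i)^2 + (\<Sum>l<j. w l * (v l i)^2))"
    using bal wsum by (auto intro!: sum.cong)
  also have "\<dots> = T + S"
    by (simp add: T_def S_def sum.distrib sum_distrib_left) (rule sum.swap)
  finally have avg: "(\<Sum>l<j. w l * (\<Sum>i<d. (s i + v l i)^2)) = T + S" .
  have "\<exists>l<j. (\<Sum>i<d. (s i + v l i)^2) \<le> T + S"
  proof (rule ccontr)
    assume "\<not> ?thesis"
    hence "\<forall>l<j. (\<Sum>i<d. (s i + v l i)^2) > T + S" by auto
    hence "(\<Sum>l<j. w l * (T + S)) < (\<Sum>l<j. w l * (\<Sum>i<d. (s i + v l i)^2))"
      using wpos j by (intro sum_strict_mono) (auto intro: mult_strict_left_mono simp: lessThan_empty_iff)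
    also have "(\<Sum>l<j. w l * (T + S)) = T + S" using wsum by (simp add: sum_distrib_right[symmetric])
    finally show False using avg by simp
  qed
  then obtain l where l: "l < j" "(\<Sum>i<d. (s i + v l i)^2) \<le> T + S" by blast
  define k' where "k' m = k m + (if m = l then 1 else 0)" for m
  have "(\<Sum>m<j. k' m) = Suc n" using l k1 by (simp add: k'_def sum.distrib)
  moreover have "(\<Sum>m<j. real (k' m) * v m i) = s i + v l i" for i
  proof -
    have "(\<Sum>m<j. real (k' m) * v m i) = (\<Sum>m<j. real (k m) * v m i + (if m = l then v m i else 0))"
      by (rule sum.cong) (auto simp: k'_def algebra_simps)
    also have "\<dots> = s i + v l i" using l by (simp add: sum.distrib s_def)
    finally show ?thesis .
  qed
  moreover have "T + S \<le> real (Suc n) * S" using k2 by (simp add: T_def s_def algebra_simps)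
  ultimately show ?case using l unfolding S_def by (intro exI[of _ k']) auto
qed


definition gN :: "real \<Rightarrow> nat" where "gN \<epsilon> = nat \<lceil>1/\<epsilon>\<rceil>"

definition Grid0 :: "(nat \<Rightarrow> real) list \<Rightarrow> real \<Rightarrow> (nat \<Rightarrow> real) set" where
  "Grid0 os \<epsilon> = (\<lambda>ks. (\<lambda>i. \<Sum>l<length os. real (ks!l) / real (gN \<epsilon>) * (os!l) i)) `
     {ks. set ks \<subseteq> {0..gN \<epsilon>} \<and> length ks = length os \<and> sum_list ks = gN \<epsilon>}"

lemma gN_props:
  assumes "0 < \<epsilon>" "\<epsilon> \<le> 1"
  shows "gN \<epsilon> \<ge> 1" "1 / real (gN \<epsilon>) \<le> \<epsilon>" "real (gN \<epsilon>) + 1 \<le> 3 / \<epsilon>"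
proof -
  have e1: "1/\<epsilon> \<ge> 1" using assms by simp
  have r: "real (gN \<epsilon>) = of_int \<lceil>1/\<epsilon>\<rceil>" unfolding gN_def using e1 by simp
  have a: "real (gN \<epsilon>) \<ge> 1/\<epsilon>" unfolding r by linarith
  have b: "real (gN \<epsilon>) < 1/\<epsilon> + 1" unfolding r by linarith
  show "gN \<epsilon> \<ge> 1" using a e1 by linarith
  show "1 / real (gN \<epsilon>) \<le> \<epsilon>" 
  proof -
    have "1 \<le> real (gN \<epsilon>) * \<epsilon>" using a assms by (simp add: field_simps)
    moreover have "real (gN \<epsilon>) > 0" using a e1 by linarith
    ultimately show ?thesis by (simp add: field_simps)
  qed
  have "1/\<epsilon> + 2 \<le> 3/\<epsilon>" using e1 assms by (simp add: divide_simps)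
  thus "real (gN \<epsilon>) + 1 \<le> 3 / \<epsilon>" using b by linarith
qed

lemma Grid0_finite_card:
  assumes "0 < \<epsilon>" "\<epsilon> \<le> 1"
  shows "finite (Grid0 os \<epsilon>)" "real (card (Grid0 os \<epsilon>)) \<le> (8 * real (length os) / \<epsilon>) ^ length os"
proof -
  let ?A = "{ks. set ks \<subseteq> {0..gN \<epsilon>} \<and> length ks = length os \<and> sum_list ks = gN \<epsilon>}"
  let ?B = "{ks. set ks \<subseteq> {0..gN \<epsilon>} \<and> length ks = length os}"
  have fB: "finite ?B" by (rule finite_lists_length_eq) simp
  have sub: "?A \<subseteq> ?B" by auto
  hence fA: "finite ?A" using fB finite_subset by blast
  show "finite (Grid0 os \<epsilon>)" unfolding Grid0_def using fA by simp
  have "card (Grid0 os \<epsilon>) \<le> card ?A" unfolding Grid0_def by (rule card_image_le[OF fA])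
  also have "\<dots> \<le> card ?B" by (rule card_mono[OF fB sub])
  also have "\<dots> = (gN \<epsilon> + 1) ^ length os" by (simp add: card_lists_length_eq)
  finally have "real (card (Grid0 os \<epsilon>)) \<le> (real (gN \<epsilon>) + 1) ^ length os"
    by (metis of_nat_1 of_nat_add of_nat_le_iff of_nat_power)
  also have "\<dots> \<le> (8 * real (length os) / \<epsilon>) ^ length os"
  proof (cases "length os = 0")
    case True thus ?thesis by simp
  next
    case False
    have l3: "real (gN \<epsilon>) + 1 \<le> 3 / \<epsilon>" using gN_props[OF assms] by simp
    have "length os \<ge> 1" using False by linarith
    hence "3 \<le> 8 * real (length os)" by simp
    note l3 also have "3 / \<epsilon> \<le> 8 * real (length os) / \<epsilon>" using \<open>3 \<le> 8 * real (length os)\<close> assms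
      by (intro divide_right_mono) auto
    finally show ?thesis by (intro power_mono) auto
  qed
  finally show "real (card (Grid0 os \<epsilon>)) \<le> (8 * real (length os) / \<epsilon>) ^ length os" .
qed

lemma Grid0_sub:
  assumes "0 < \<epsilon>" "\<epsilon> \<le> 1"
  shows "Grid0 os \<epsilon> \<subseteq> simplex_hull os"
proof
  fix x assume "x \<in> Grid0 os \<epsilon>"
  then obtain ks where ks: "set ks \<subseteq> {0..gN \<epsilon>}" "length ks = length os" "sum_list ks = gN \<epsilon>"
    and x: "x = (\<lambda>i. \<Sum>l<length os. real (ks!l) / real (gN \<epsilon>) * (os!l) i)"
    unfolding Grid0_def by auto
  have N: "real (gN \<epsilon>) > 0" using gN_props(1)[OF assms] by simp
  have "(\<Sum>l<length os. real (ks!l) / real (gN \<epsilon>)) = real (\<Sum>l<length os. ks!l) / real (gN \<epsilon>)"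
    by (simp add: sum_divide_distrib)
  also have "(\<Sum>l<length os. ks!l) = sum_list ks"
    using ks(2) by (simp add: sum_list_sum_nth atLeast0LessThan)
  finally have "(\<Sum>l<length os. real (ks!l) / real (gN \<epsilon>)) = 1" using ks(3) N by simp
  thus "x \<in> simplex_hull os" unfolding simplex_hull_def x
    by (intro CollectI exI[of _ "\<lambda>l. real (ks!l) / real (gN \<epsilon>)"]) auto
qed


lemma main_case:
  fixes j d :: nat and Q :: "(nat \<Rightarrow> real) set" and Qs :: "nat \<Rightarrow> (nat \<Rightarrow> real) set" and \<epsilon> :: real
  assumes j: "j \<ge> 1" and finQ: "finite Q" and QU: "Q = (\<Union>l<j. Qs l)"
    and ne: "\<forall>l<j. Qs l \<noteq> {}"
    and disj: "\<forall>l<j. \<forall>l'<j. l \<noteq> l' \<longrightarrow> Qs l \<inter> Qs l' = {}"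
    and e: "0 < \<epsilon>" "\<epsilon> \<le> 1"
  shows "\<exists>\<tau>\<in>Grid0 (map (\<lambda>l. mean_pt (Qs l)) [0..<j]) \<epsilon>.
     enorm d (vdiff \<tau> (mean_pt Q)) \<le> sqrt \<epsilon> * sqrt ((\<Sum>q\<in>Q. (enorm d (vdiff q (mean_pt Q)))^2) / real (card Q))"
proof -
  define os where "os = map (\<lambda>l. mean_pt (Qs l)) [0..<j]"
  define oQ where "oQ = mean_pt Q"
  define N where "N = gN \<epsilon>"
  have N1: "N \<ge> 1" and Ne: "1 / real N \<le> \<epsilon>" using gN_props[OF e] by (auto simp: N_def)
  have fin: "finite (Qs l)" if "l < j" for l
    using finQ QU that by (meson UN_I finite_subset lessThan_iff subsetI)
  have cardQ: "card Q = (\<Sum>l<j. card (Qs l))"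
    unfolding QU using fin disj by (subst card_UN_disjoint) auto
  have cpos: "card (Qs l) > 0" if "l < j" for l using fin ne that by (simp add: card_gt_0_iff)
  have cQpos: "real (card Q) > 0"
  proof -
    have "card (Qs 0) \<le> card Q" unfolding cardQ using j
      by (intro member_le_sum) auto
    thus ?thesis using cpos[of 0] j by linarith
  qed
  have sumQ: "(\<Sum>q\<in>Q. f q) = (\<Sum>l<j. \<Sum>q\<in>Qs l. f q)" for f :: "(nat \<Rightarrow> real) \<Rightarrow> real"
    unfolding QU using fin disj by (subst sum.UNION_disjoint) auto
  define w where "w l = real (card (Qs l)) / real (card Q)" for l
  define v where "v l i = mean_pt (Qs l) i - oQ i" for l i
  have wpos: "\<forall>l<j. w l > 0" using cpos cQpos by (auto simp: w_def)
  have wsum: "(\<Sum>l<j. w l) = 1"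
    using cQpos by (simp add: w_def sum_divide_distrib[symmetric] cardQ)
  have mcl: "real (card (Qs l)) * mean_pt (Qs l) i = (\<Sum>q\<in>Qs l. q i)" if "l < j" for l i
    using cpos[OF that] by (simp add: mean_pt_def)
  have oQw: "oQ i = (\<Sum>l<j. w l * mean_pt (Qs l) i)" for i
  proof -
    have "(\<Sum>l<j. w l * mean_pt (Qs l) i) = (\<Sum>l<j. real (card (Qs l)) * mean_pt (Qs l) i) / real (card Q)"
      by (simp add: w_def sum_divide_distrib)
    also have "\<dots> = (\<Sum>l<j. \<Sum>q\<in>Qs l. q i) / real (card Q)" using mcl by simp
    also have "\<dots> = oQ i" by (simp add: oQ_def mean_pt_def sumQ[symmetric])
    finally show ?thesis by simp
  qed
  have bal: "\<forall>i<d. (\<Sum>l<j. w l * v l i) = 0"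
  proof (intro allI impI)
    fix i
    have "(\<Sum>l<j. w l * v l i) = (\<Sum>l<j. w l * mean_pt (Qs l) i) - (\<Sum>l<j. w l) * oQ i"
      by (simp add: v_def right_diff_distrib sum_subtractf sum_distrib_right)
    thus "(\<Sum>l<j. w l * v l i) = 0" using oQw wsum by simp
  qed
  define S where "S = (\<Sum>l<j. w l * (\<Sum>i<d. (v l i)^2))"
  define D where "D = (\<Sum>q\<in>Q. (enorm d (vdiff q oQ))^2) / real (card Q)"
  have en2: "(enorm d (vdiff q oQ))^2 = (\<Sum>i<d. (q i - oQ i)^2)" for q
    unfolding enorm_def vdiff_def by (simp add: sum_nonneg)
  have SD: "S \<le> D"
  proof -
    have "S = (\<Sum>l<j. \<Sum>i<d. real (card (Qs l)) * (mean_pt (Qs l) i - oQ i)^2) / real (card Q)"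
      by (simp add: S_def w_def v_def sum_divide_distrib sum_distrib_left)
    also have "\<dots> \<le> (\<Sum>l<j. \<Sum>i<d. \<Sum>q\<in>Qs l. (q i - oQ i)^2) / real (card Q)"
      using cQpos
      apply (intro divide_right_mono sum_mono)
      subgoal for l i using var_cluster[OF fin[of l], of "\<lambda>q. q i" "oQ i"] ne
        by (simp add: mean_pt_def)
      by simp
    also have "\<dots> = D"
      unfolding D_def en2 sumQ
      by (simp add: sum.swap[of _ "{..<d}"])
    finally show ?thesis .
  qed
  obtain k where k1: "(\<Sum>l<j. k l) = N"
    and k2: "(\<Sum>i<d. (\<Sum>l<j. real (k l) * v l i)^2) \<le> real N * S"
    using greedy[OF j wpos wsum bal, of N] unfolding S_def by blast
  define \<tau> where "\<tau> = (\<lambda>i. \<Sum>l<length os. real (map k [0..<j] ! l) / real N * (os!l) i)"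
  have los: "length os = j" by (simp add: os_def)
  have \<tau>2: "\<tau> i = (\<Sum>l<j. real (k l) / real N * mean_pt (Qs l) i)" for i
    unfolding \<tau>_def los by (rule sum.cong) (auto simp: os_def)
  have \<tau>G: "\<tau> \<in> Grid0 os \<epsilon>"
    unfolding Grid0_def \<tau>_def N_def
  proof (rule imageI, safe)
    fix x assume "x \<in> set (map k [0..<j])"
    then obtain l where l: "l < j" "x = k l" by auto
    have "k l \<le> (\<Sum>l<j. k l)" using l by (intro member_le_sum) auto
    thus "x \<in> {0..gN \<epsilon>}" using l k1 N_def by simp
  next
    show "length (map k [0..<j]) = length os" using los by simp
  next
    show "sum_list (map k [0..<j]) = gN \<epsilon>"
      using k1 N_def by (simp add: sum_list_sum_nth atLeast0LessThan)
  qed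
  have Npos: "real N > 0" using N1 by simp
  have diff: "\<tau> i - oQ i = (\<Sum>l<j. real (k l) * v l i) / real N" for i
  proof -
    have "(\<Sum>l<j. real (k l) / real N) = 1"
      using k1 Npos by (simp add: sum_divide_distrib[symmetric] flip: of_nat_sum)
    hence "\<tau> i - oQ i = (\<Sum>l<j. real (k l) / real N * mean_pt (Qs l) i) - (\<Sum>l<j. real (k l) / real N) * oQ i"
      using \<tau>2 by simp
    also have "\<dots> = (\<Sum>l<j. real (k l) / real N * v l i)"
      by (simp add: v_def sum_distrib_right sum_subtractf right_diff_distrib)
    also have "\<dots> = (\<Sum>l<j. real (k l) * v l i) / real N"
      by (simp add: sum_divide_distrib)
    finally show ?thesis .
  qed
  have "(enorm d (vdiff \<tau> oQ))^2 = (\<Sum>i<d. (\<Sum>l<j. real (k l) * v l i)^2) / (real N)^2"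
  proof -
    have "(enorm d (vdiff \<tau> oQ))^2 = (\<Sum>i<d. ((\<Sum>l<j. real (k l) * v l i) / real N)^2)"
      using en2[of \<tau>] diff by (simp only:)
    also have "\<dots> = (\<Sum>i<d. (\<Sum>l<j. real (k l) * v l i)^2) / (real N)^2"
      by (subst sum_divide_distrib) (simp only: power_divide)
    finally show ?thesis .
  qed
  also have "\<dots> \<le> real N * S / (real N)^2" using k2 Npos by (intro divide_right_mono) auto
  also have "\<dots> = S / real N" using Npos by (simp add: power2_eq_square)
  also have "\<dots> \<le> \<epsilon> * D"
  proof -
    have S0: "S \<ge> 0" using wpos unfolding S_def by (intro sum_nonneg mult_nonneg_nonneg) (auto intro!: sum_nonneg simp: less_imp_le)
    have "S / real N = S * (1 / real N)" by simp
    also have "\<dots> \<le> D * \<epsilon>" using S0 SD Ne Npos by (intro mult_mono) auto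
    finally show ?thesis by (simp add: mult.commute)
  qed
  finally have sq: "(enorm d (vdiff \<tau> oQ))^2 \<le> \<epsilon> * D" .
  have "enorm d (vdiff \<tau> oQ) \<le> sqrt (\<epsilon> * D)"
    using real_le_rsqrt[OF sq] by simp
  hence "enorm d (vdiff \<tau> oQ) \<le> sqrt \<epsilon> * sqrt D" by (simp add: real_sqrt_mult)
  thus ?thesis using \<tau>G unfolding os_def oQ_def D_def by blast
qed


theorem lemma1:
  shows "\<exists>Grid :: (nat \<Rightarrow> real) list \<Rightarrow> real \<Rightarrow> (nat \<Rightarrow> real) set.
    \<forall>j::nat. j \<ge> 1 \<longrightarrow> (\<exists>C::real. C > 0 \<and>
    (\<forall>(d::nat) (Q :: (nat \<Rightarrow> real) set) (Qs :: nat \<Rightarrow> (nat \<Rightarrow> real) set) (\<epsilon>::real).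
       finite Q \<and> (\<forall>q\<in>Q. in_Rd d q)
       \<and> Q = (\<Union>l<j. Qs l)
       \<and> (\<forall>l<j. Qs l \<noteq> {})
       \<and> (\<forall>l<j. \<forall>l'<j. l \<noteq> l' \<longrightarrow> Qs l \<inter> Qs l' = {})
       \<and> 0 < \<epsilon> \<and> \<epsilon> \<le> 1
     \<longrightarrow> (let os = map (\<lambda>l. mean_pt (Qs l)) [0..<j];
              oQ = mean_pt Q;
              \<delta> = sqrt ((\<Sum>q\<in>Q. (enorm d (vdiff q oQ))^2) / real (card Q));
              G = Grid os \<epsilon>
          in finite G \<and> G \<subseteq> simplex_hull os
             \<and> real (card G) \<le> C * (8 * real j / \<epsilon>) ^ j
             \<and> (\<exists>\<tau>\<in>G. enorm d (vdiff \<tau> oQ) \<le> sqrt \<epsilon> * \<delta>))))"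
  proof (rule exI[of _ Grid0], intro allI impI exI[of _ "1::real"] conjI)
  fix j :: nat assume j: "j \<ge> 1"
  show "(1::real) > 0" by simp
  fix d Q Qs \<epsilon>
  assume H: "finite Q \<and> (\<forall>q\<in>Q. in_Rd d q) \<and> Q = (\<Union>l<j. Qs l) \<and> (\<forall>l<j. Qs l \<noteq> {})
       \<and> (\<forall>l<j. \<forall>l'<j. l \<noteq> l' \<longrightarrow> Qs l \<inter> Qs l' = {}) \<and> 0 < \<epsilon> \<and> (\<epsilon>::real) \<le> 1"
  hence e: "0 < \<epsilon>" "\<epsilon> \<le> 1" by auto
  have len: "length (map (\<lambda>l. mean_pt (Qs l)) [0..<j]) = j" by simp
  show "let os = map (\<lambda>l. mean_pt (Qs l)) [0..<j];
              oQ = mean_pt Q;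
              \<delta> = sqrt ((\<Sum>q\<in>Q. (enorm d (vdiff q oQ))^2) / real (card Q));
              G = Grid0 os \<epsilon>
          in finite G \<and> G \<subseteq> simplex_hull os
             \<and> real (card G) \<le> 1 * (8 * real j / \<epsilon>) ^ j
             \<and> (\<exists>\<tau>\<in>G. enorm d (vdiff \<tau> oQ) \<le> sqrt \<epsilon> * \<delta>)"
    unfolding Let_def
    using Grid0_finite_card[OF e, of "map (\<lambda>l. mean_pt (Qs l)) [0..<j]"]
      Grid0_sub[OF e, of "map (\<lambda>l. mean_pt (Qs l)) [0..<j]"]
      main_case[OF j, of Q Qs \<epsilon> d] H
    unfolding len by auto
qed

end
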